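(* Let $\otimes$ and $\oplus$ be uninorms on $[0,1]$. If $\otimes$ is a $T$-norm which is a copula and $\oplus$ satisfies property $A'$, then $(\otimes,\oplus)$ satisfies the rearrangement inequality. If $\otimes$ satisfies property $A$ and $\oplus$ is a $T$-conorm which is the dual $\Phi(c)(x,y)=1-c(1-x,1-y)$ of a copula $c$, then $(\otimes,\oplus)$ satisfies the dual rearrangement inequality.
   Context: A uninorm is a function $\otimes:[0,1]^2\to[0,1]$ that is commutative, associative, monotonic ($x\leq y$ implies $x\otimes z\leq y\otimes z$), and has an identity element $e\in[0,1]$; a $T$-norm is a uninorm with identity $1$, a $T$-conorm one with identity $0$. A copula is a function $c:[0,1]^2\to[0,1]$ that satisfies neutrality of $1$, is monotonic, and satisfies property $B$: for all $0\leq x\leq y\leq1$, $0\leq z\leq w\leq1$, $c(x,w)-c(x,z)\leq c(y,w)-c(y,z)$. Property $A$: for all $0\leq x\leq y\leq z\leq w\leq 1$, $w+x\leq y+z\Rightarrow f(x,w)\leq f(y,z)$; property $A'$: for all such, $w+x\geq y+z\Rightarrow f(x,w)\geq f(y,z)$. $(\otimes,\oplus)$ satisfies the rearrangement inequality if for every $n\geq1$, all $0\leq x_1\leq\cdots\leq x_n\leq 1$, $0\leq y_1\leq\cdots\leq y_n\leq 1$ and every permutation $\sigma$ of $\{1,\dots,n\}$, $$(x_n\otimes y_1)\oplus\cdots\oplus(x_1\otimes y_n)\leq (x_{\sigma(1)}\otimes y_1)\oplus\cdots\oplus(x_{\sigma(n)}\otimes y_n)\leq (x_1\otimes y_1)\oplus\cdots\oplus(x_n\otimes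 y_n),$$ and the dual rearrangement inequality if for all such data $$(x_n\oplus y_1)\otimes\cdots\otimes(x_1\oplus y_n)\geq (x_{\sigma(1)}\oplus y_1)\otimes\cdots\otimes(x_{\sigma(n)}\oplus y_n)\geq (x_1\oplus y_1)\otimes\cdots\otimes(x_n\oplus y_n).$$ *)

theory Defs
  imports Complex_Main "HOL-Combinatorics.Permutations"
begin

text \<open>Binary operations on [0,1] are modelled as functions real \<Rightarrow> real \<Rightarrow> real;
  all axioms are required only on the unit interval.\<close>

definition uninorm :: "(real \<Rightarrow> real \<Rightarrow> real) \<Rightarrow> bool" where
  "uninorm U \<longleftrightarrow>
     (\<forall>x\<in>{0..1}. \<forall>y\<in>{0..1}. U x y \<in> {0..1}) \<and>
     (\<forall>x\<in>{0..1}. \<forall>y\<in>{0..1}. U x y = U y x) \<and>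
     (\<forall>x\<in>{0..1}. \<forall>y\<in>{0..1}. \<forall>z\<in>{0..1}. U (U x y) z = U x (U y z)) \<and>
     (\<forall>x\<in>{0..1}. \<forall>y\<in>{0..1}. \<forall>z\<in>{0..1}. x \<le> y \<longrightarrow> U x z \<le> U y z) \<and>
     (\<exists>e\<in>{0..1}. \<forall>x\<in>{0..1}. U e x = x \<and> U x e = x)"

definition tnorm :: "(real \<Rightarrow> real \<Rightarrow> real) \<Rightarrow> bool" where
  "tnorm U \<longleftrightarrow> uninorm U \<and> (\<forall>x\<in>{0..1}. U 1 x = x \<and> U x 1 = x)"

definition tconorm :: "(real \<Rightarrow> real \<Rightarrow> real) \<Rightarrow> bool" where
  "tconorm U \<longleftrightarrow> uninorm U \<and> (\<forall>x\<in>{0..1}. U 0 x = x \<and> U x 0 = x)"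

text \<open>Copula in the sense of the paper: 1 is neutral, monotone (in each argument), property B.\<close>
definition copula :: "(real \<Rightarrow> real \<Rightarrow> real) \<Rightarrow> bool" where
  "copula c \<longleftrightarrow>
     (\<forall>x\<in>{0..1}. \<forall>y\<in>{0..1}. c x y \<in> {0..1}) \<and>
     (\<forall>x\<in>{0..1}. c x 1 = x \<and> c 1 x = x) \<and>
     (\<forall>x\<in>{0..1}. \<forall>y\<in>{0..1}. \<forall>z\<in>{0..1}. x \<le> y \<longrightarrow> c x z \<le> c y z \<and> c z x \<le> c z y) \<and>
     (\<forall>x y z w. 0 \<le> x \<and> x \<le> y \<and> y \<le> 1 \<and> 0 \<le> z \<and> z \<le> w \<and> w \<le> 1 \<longrightarrow>
        c x w - c x z \<le> c y w - c y z)"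

definition copula_dual :: "(real \<Rightarrow> real \<Rightarrow> real) \<Rightarrow> real \<Rightarrow> real \<Rightarrow> real" where
  "copula_dual c x y = 1 - c (1 - x) (1 - y)"

definition propA :: "(real \<Rightarrow> real \<Rightarrow> real) \<Rightarrow> bool" where
  "propA f \<longleftrightarrow> (\<forall>x y z w. 0 \<le> x \<and> x \<le> y \<and> y \<le> z \<and> z \<le> w \<and> w \<le> 1 \<longrightarrow>
      w + x \<le> y + z \<longrightarrow> f x w \<le> f y z)"

definition propA' :: "(real \<Rightarrow> real \<Rightarrow> real) \<Rightarrow> bool" where
  "propA' f \<longleftrightarrow> (\<forall>x y z w. 0 \<le> x \<and> x \<le> y \<and> y \<le> z \<and> z \<le> w \<and> w \<le> 1 \<longrightarrow>
      w + x \<ge> y + z \<longrightarrow> f x w \<ge> f y z)"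

text \<open>Iterated operation a_1 \<oplus> ... \<oplus> a_n (left-nested), meaningful for n \<ge> 1.\<close>
definition iter_op :: "(real \<Rightarrow> real \<Rightarrow> real) \<Rightarrow> (nat \<Rightarrow> real) \<Rightarrow> nat \<Rightarrow> real" where
  "iter_op f a n = foldl f (a 1) (map a [2..<Suc n])"

definition sorted_unit :: "(nat \<Rightarrow> real) \<Rightarrow> nat \<Rightarrow> bool" where
  "sorted_unit x n \<longleftrightarrow> (\<forall>i\<in>{1..n}. 0 \<le> x i \<and> x i \<le> 1) \<and>
     (\<forall>i j. 1 \<le> i \<and> i \<le> j \<and> j \<le> n \<longrightarrow> x i \<le> x j)"

definition rearrangement :: "(real \<Rightarrow> real \<Rightarrow> real) \<Rightarrow> (real \<Rightarrow> real \<Rightarrow> real) \<Rightarrow> bool" where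
  "rearrangement T S \<longleftrightarrow> (\<forall>n\<ge>1. \<forall>x y \<sigma>. sorted_unit x n \<and> sorted_unit y n \<and> \<sigma> permutes {1..n} \<longrightarrow>
      iter_op S (\<lambda>i. T (x (n + 1 - i)) (y i)) n \<le> iter_op S (\<lambda>i. T (x (\<sigma> i)) (y i)) n \<and>
      iter_op S (\<lambda>i. T (x (\<sigma> i)) (y i)) n \<le> iter_op S (\<lambda>i. T (x i) (y i)) n)"

definition dual_rearrangement :: "(real \<Rightarrow> real \<Rightarrow> real) \<Rightarrow> (real \<Rightarrow> real \<Rightarrow> real) \<Rightarrow> bool" where
  "dual_rearrangement T S \<longleftrightarrow> (\<forall>n\<ge>1. \<forall>x y \<sigma>. sorted_unit x n \<and> sorted_unit y n \<and> \<sigma> permutes {1..n} \<longrightarrow>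
      iter_op T (\<lambda>i. S (x (n + 1 - i)) (y i)) n \<ge> iter_op T (\<lambda>i. S (x (\<sigma> i)) (y i)) n \<and>
      iter_op T (\<lambda>i. S (x (\<sigma> i)) (y i)) n \<ge> iter_op T (\<lambda>i. S (x i) (y i)) n)"

end

theory Submission
  imports Defs "HOL-Library.Multiset"
begin

definition clamp :: "real \<Rightarrow> real" where "clamp t = max 0 (min 1 t)"

lemma clamp_in: "clamp t \<in> {0..1}" by (simp add: clamp_def)
lemma clamp_id: "t \<in> {0..1} \<Longrightarrow> clamp t = t" by (simp add: clamp_def)

locale unin =
  fixes U :: "real \<Rightarrow> real \<Rightarrow> real" and e :: real
  assumes closed: "x \<in> {0..1} \<Longrightarrow> y \<in> {0..1} \<Longrightarrow> U x y \<in> {0..1}"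
    and comm: "x \<in> {0..1} \<Longrightarrow> y \<in> {0..1} \<Longrightarrow> U x y = U y x"
    and assoc: "x \<in> {0..1} \<Longrightarrow> y \<in> {0..1} \<Longrightarrow> z \<in> {0..1} \<Longrightarrow> U (U x y) z = U x (U y z)"
    and e01: "e \<in> {0..1}"
    and ident: "x \<in> {0..1} \<Longrightarrow> U e x = x"
begin

definition g :: "real \<Rightarrow> real \<Rightarrow> real" where "g a b = U (clamp a) (clamp b)"

lemma g_in: "g a b \<in> {0..1}" unfolding g_def by (rule closed[OF clamp_in clamp_in])

lemma g_id: "a \<in> {0..1} \<Longrightarrow> b \<in> {0..1} \<Longrightarrow> g a b = U a b" by (simp add: g_def clamp_id)

lemma g_comm: "g a b = g b a" unfolding g_def by (rule comm[OF clamp_in clamp_in])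

lemma g_assoc: "g (g a b) c = g a (g b c)"
  unfolding g_def clamp_id[OF closed[OF clamp_in clamp_in]] by (rule assoc[OF clamp_in clamp_in clamp_in])

lemma g_cfc: "comp_fun_commute g"
  apply unfold_locales
  apply (rule ext)
  apply (simp add: o_def)
  by (metis g_assoc g_comm)

interpretation gc: comp_fun_commute g by (rule g_cfc)

definition F :: "(nat \<Rightarrow> real) \<Rightarrow> nat \<Rightarrow> real" where
  "F a n = fold_mset g e (image_mset a (mset_set {1..n}))"

lemma g_in': "0 \<le> g a b" "g a b \<le> 1" using g_in by auto

lemma fold_in: "fold_mset g e M \<in> {0..1}"
  using e01 by (induct M) (auto simp: g_in')

lemma foldl_eq: "z \<in> {0..1} \<Longrightarrow> \<forall>x\<in>set xs. x \<in> {0..1} \<Longrightarrow> foldl U z xs = fold_mset g z (mset xs)"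
proof (induct xs arbitrary: z)
  case Nil then show ?case by simp
next
  case (Cons x xs)
  have "foldl U z (x # xs) = foldl U (U z x) xs" by simp
  also have "\<dots> = fold_mset g (U z x) (mset xs)" using Cons closed by auto
  also have "U z x = g x z" using Cons by (simp add: g_id comm)
  also have "fold_mset g (g x z) (mset xs) = g x (fold_mset g z (mset xs))"
    by (simp add: gc.fold_mset_fun_left_comm)
  finally show ?case by simp
qed

lemma iter_F: assumes "n \<ge> 1" "\<forall>i\<in>{1..n}. a i \<in> {0..1}"
  shows "iter_op U a n = F a n"
proof -
  have a1: "a 1 \<in> {0..1}" using assms by auto
  have "iter_op U a n = fold_mset g (a 1) (mset (map a [2..<Suc n]))"
    unfolding iter_op_def using assms by (intro foldl_eq) auto
  also have "a 1 = g (a 1) e" using a1 e01 by (simp add: g_id comm ident)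
  also have "fold_mset g (g (a 1) e) (mset (map a [2..<Suc n])) = fold_mset g e (mset (map a (1 # [2..<Suc n])))"
    by (simp add: gc.fold_mset_fun_left_comm)
  also have "1 # [2..<Suc n] = [1..<Suc n]" using upt_conv_Cons[of 1 "Suc n"] assms(1) by (simp add: numeral_2_eq_2)
  also have "mset (map a [1..<Suc n]) = image_mset a (mset_set {1..n})"
    by (simp only: mset_map mset_upt atLeastLessThanSuc_atLeastAtMost)
  finally show ?thesis by (simp add: F_def)
qed

lemma F_cong: "(\<And>i. i \<in> {1..n} \<Longrightarrow> a i = b i) \<Longrightarrow> F a n = F b n"
  unfolding F_def by (metis finite_atLeastAtMost finite_set_mset_mset_set image_mset_cong)

lemma F_perm: assumes "\<sigma> permutes {1..n}" shows "F (a \<circ> \<sigma>) n = F a n"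
proof -
  have "image_mset (a \<circ> \<sigma>) (mset_set {1..n}) = image_mset a (image_mset \<sigma> (mset_set {1..n}))"
    by (simp add: image_mset.compositionality)
  also have "image_mset \<sigma> (mset_set {1..n}) = mset_set (\<sigma> ` {1..n})"
    using assms by (intro image_mset_mset_set) (auto dest: permutes_inj_on)
  also have "\<sigma> ` {1..n} = {1..n}" using assms by (rule permutes_image)
  finally have eq: "image_mset (a \<circ> \<sigma>) (mset_set {1..n}) = image_mset a (mset_set {1..n})" .
  show ?thesis unfolding F_def eq ..
qed

lemma F_swap:
  assumes ij: "i \<in> {1..n}" "j \<in> {1..n}" "i \<noteq> j"
    and same: "\<And>k. k \<in> {1..n} \<Longrightarrow> k \<noteq> i \<Longrightarrow> k \<noteq> j \<Longrightarrow> h' k = h k"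
    and vals: "h i \<in> {0..1}" "h j \<in> {0..1}" "h' i \<in> {0..1}" "h' j \<in> {0..1}"
    and pair: "le (U (h i) (h j)) (U (h' i) (h' j))"
    and lemono: "\<And>a b r. a \<in> {0..1} \<Longrightarrow> b \<in> {0..1} \<Longrightarrow> r \<in> {0..1} \<Longrightarrow> le a b \<Longrightarrow> le (U a r) (U b r)"
  shows "le (F h n) (F h' n)"
proof -
  define A where "A = {1..n} - {i, j}"
  have fA: "finite A" by (simp add: A_def)
  have ms: "mset_set {1..n} = add_mset i (add_mset j (mset_set A))"
  proof -
    have "{1..n} = insert i (insert j A)" using ij by (auto simp: A_def)
    moreover have "i \<notin> insert j A" "j \<notin> A" using ij by (auto simp: A_def)
    ultimately show ?thesis using fA by simp
  qed
  define R where "R = fold_mset g e (image_mset h (mset_set A))"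
  have R': "fold_mset g e (image_mset h' (mset_set A)) = R"
    unfolding R_def by (rule arg_cong[where f="fold_mset g e"], rule image_mset_cong) (use fA same in \<open>auto simp: A_def\<close>)
  have R01: "R \<in> {0..1}" unfolding R_def by (rule fold_in)
  have Fh: "F h n = U (U (h i) (h j)) R"
  proof -
    have "F h n = g (h i) (g (h j) R)" unfolding F_def ms R_def by simp
    also have "\<dots> = g (g (h i) (h j)) R" by (simp add: g_assoc)
    also have "\<dots> = U (U (h i) (h j)) R" using g_id[OF vals(1) vals(2)] g_id[OF closed[OF vals(1) vals(2)] R01] by simp
    finally show ?thesis .
  qed
  have Fh': "F h' n = U (U (h' i) (h' j)) R"
  proof -
    have "F h' n = g (h' i) (g (h' j) R)" unfolding F_def ms R'[symmetric] by simp
    also have "\<dots> = g (g (h' i) (h' j)) R" by (simp add: g_assoc)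
    also have "\<dots> = U (U (h' i) (h' j)) R" using g_id[OF vals(3) vals(4)] g_id[OF closed[OF vals(3) vals(4)] R01] by simp
    finally show ?thesis .
  qed
  show ?thesis unfolding Fh Fh' using lemono[OF closed closed R01 pair] vals by simp
qed

lemma F_max:
  assumes refl: "\<And>a. le a a" and trans: "\<And>a b c. le a b \<Longrightarrow> le b c \<Longrightarrow> le a c"
    and lemono: "\<And>a b r. a \<in> {0..1} \<Longrightarrow> b \<in> {0..1} \<Longrightarrow> r \<in> {0..1} \<Longrightarrow> le a b \<Longrightarrow> le (U a r) (U b r)"
    and phi: "\<And>a b. a \<in> {0..1} \<Longrightarrow> b \<in> {0..1} \<Longrightarrow> \<phi> a b \<in> {0..1}"
    and H: "\<And>p q y1 y2. p \<in> {0..1} \<Longrightarrow> q \<in> {0..1} \<Longrightarrow> y1 \<in> {0..1} \<Longrightarrow> y2 \<in> {0..1} \<Longrightarrow>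
              p \<le> q \<Longrightarrow> y1 \<le> y2 \<Longrightarrow> le (U (\<phi> q y1) (\<phi> p y2)) (U (\<phi> p y1) (\<phi> q y2))"
    and sx: "sorted_unit x n" and sy: "sorted_unit y n"
  shows "\<sigma> permutes {1..n} \<Longrightarrow> le (F (\<lambda>k. \<phi> (x (\<sigma> k)) (y k)) n) (F (\<lambda>k. \<phi> (x k) (y k)) n)"
proof (induct "card {k\<in>{1..n}. \<sigma> k \<noteq> k}" arbitrary: \<sigma> rule: less_induct)
  case less
  note perm = less.prems
  let ?D = "{k\<in>{1..n}. \<sigma> k \<noteq> k}"
  have x01: "\<And>k. k \<in> {1..n} \<Longrightarrow> x k \<in> {0..1}" using sx by (auto simp: sorted_unit_def)
  have y01: "\<And>k. k \<in> {1..n} \<Longrightarrow> y k \<in> {0..1}" using sy by (auto simp: sorted_unit_def)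
  have xmono: "\<And>a b. 1 \<le> a \<Longrightarrow> a \<le> b \<Longrightarrow> b \<le> n \<Longrightarrow> x a \<le> x b" using sx by (auto simp: sorted_unit_def)
  have ymono: "\<And>a b. 1 \<le> a \<Longrightarrow> a \<le> b \<Longrightarrow> b \<le> n \<Longrightarrow> y a \<le> y b" using sy by (auto simp: sorted_unit_def)
  have sin: "\<And>k. \<sigma> k \<in> {1..n} \<longleftrightarrow> k \<in> {1..n}" using perm by (rule permutes_in_image)
  show ?case
  proof (cases "?D = {}")
    case True
    then have "F (\<lambda>k. \<phi> (x (\<sigma> k)) (y k)) n = F (\<lambda>k. \<phi> (x k) (y k)) n"
      by (intro F_cong) auto
    then show ?thesis using refl by simp
  next
    case False
    have fD: "finite ?D" by simp
    define j where "j = Max ?D"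
    have jD: "j \<in> ?D" using False fD unfolding j_def by (rule Max_in[rotated])
    have jmax: "\<And>k. k \<in> ?D \<Longrightarrow> k \<le> j" using fD unfolding j_def by simp
    define i where "i = inv \<sigma> j"
    have si: "\<sigma> i = j" unfolding i_def using perm by (simp add: permutes_inverses)
    have iin: "i \<in> {1..n}" using sin[of i] si jD by simp
    have ij: "i \<noteq> j" using si jD by auto
    have iD: "i \<in> ?D" using iin si ij by auto
    have ilj: "i < j" using jmax[OF iD] ij by simp
    have injs: "inj \<sigma>" using perm by (rule permutes_inj)
    have sjj: "\<sigma> j \<le> j"
    proof (rule ccontr)
      assume "\<not> \<sigma> j \<le> j"
      moreover have "\<sigma> (\<sigma> j) \<noteq> \<sigma> j" using jD injs by (auto dest: injD)
      moreover have "\<sigma> j \<in> {1..n}" using sin jD by auto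
      ultimately show False using jmax[of "\<sigma> j"] by auto
    qed
    define \<sigma>' where "\<sigma>' = \<sigma> \<circ> Transposition.transpose i j"
    have perm': "\<sigma>' permutes {1..n}" unfolding \<sigma>'_def
      using permutes_compose[OF permutes_swap_id[OF iin] perm] jD by auto
    have sub: "{k\<in>{1..n}. \<sigma>' k \<noteq> k} \<subseteq> ?D - {j}"
      using iD si unfolding \<sigma>'_def by (auto simp: Transposition.transpose_def split: if_splits)
    have lt: "card {k\<in>{1..n}. \<sigma>' k \<noteq> k} < card ?D"
      by (rule psubset_card_mono[OF fD]) (use sub jD in blast)
    have IH: "le (F (\<lambda>k. \<phi> (x (\<sigma>' k)) (y k)) n) (F (\<lambda>k. \<phi> (x k) (y k)) n)"
      by (rule less.hyps[OF lt perm'])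
    have s'i: "\<sigma>' i = \<sigma> j" "\<sigma>' j = j" using si by (auto simp: \<sigma>'_def)
    have sjin: "\<sigma> j \<in> {1..n}" using sin jD by auto
    have jin: "j \<in> {1..n}" using jD by auto
    have sw: "le (F (\<lambda>k. \<phi> (x (\<sigma> k)) (y k)) n) (F (\<lambda>k. \<phi> (x (\<sigma>' k)) (y k)) n)"
    proof (rule F_swap[where le=le and h="\<lambda>k. \<phi> (x (\<sigma> k)) (y k)" and h'="\<lambda>k. \<phi> (x (\<sigma>' k)) (y k)", OF iin jin ij])
      show "\<And>a b r. a \<in> {0..1} \<Longrightarrow> b \<in> {0..1} \<Longrightarrow> r \<in> {0..1} \<Longrightarrow> le a b \<Longrightarrow> le (U a r) (U b r)"
        by (rule lemono)
      show "\<And>k. k \<in> {1..n} \<Longrightarrow> k \<noteq> i \<Longrightarrow> k \<noteq> j \<Longrightarrow> \<phi> (x (\<sigma>' k)) (y k) = \<phi> (x (\<sigma> k)) (y k)"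
        by (simp add: \<sigma>'_def)
      show "le (U (\<phi> (x (\<sigma> i)) (y i)) (\<phi> (x (\<sigma> j)) (y j))) (U (\<phi> (x (\<sigma>' i)) (y i)) (\<phi> (x (\<sigma>' j)) (y j)))"
        unfolding s'i si
        by (rule H) (use x01 y01 iin jin sjin sjj ilj xmono ymono in auto)
    qed (use phi x01 y01 iin jin sjin s'i si in auto)
    show ?thesis by (rule trans[OF sw IH])
  qed
qed

lemma F_min:
  assumes refl: "\<And>a. le a a" and trans: "\<And>a b c. le a b \<Longrightarrow> le b c \<Longrightarrow> le a c"
    and lemono: "\<And>a b r. a \<in> {0..1} \<Longrightarrow> b \<in> {0..1} \<Longrightarrow> r \<in> {0..1} \<Longrightarrow> le a b \<Longrightarrow> le (U a r) (U b r)"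
    and phi: "\<And>a b. a \<in> {0..1} \<Longrightarrow> b \<in> {0..1} \<Longrightarrow> \<phi> a b \<in> {0..1}"
    and H: "\<And>p q y1 y2. p \<in> {0..1} \<Longrightarrow> q \<in> {0..1} \<Longrightarrow> y1 \<in> {0..1} \<Longrightarrow> y2 \<in> {0..1} \<Longrightarrow>
              p \<le> q \<Longrightarrow> y1 \<le> y2 \<Longrightarrow> le (U (\<phi> q y1) (\<phi> p y2)) (U (\<phi> p y1) (\<phi> q y2))"
    and sx: "sorted_unit x n" and sy: "sorted_unit y n"
  shows "\<sigma> permutes {1..n} \<Longrightarrow> le (F (\<lambda>k. \<phi> (x (n + 1 - k)) (y k)) n) (F (\<lambda>k. \<phi> (x (\<sigma> k)) (y k)) n)"
proof (induct "card {k\<in>{1..n}. \<sigma> k \<noteq> n + 1 - k}" arbitrary: \<sigma> rule: less_induct)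
  case less
  note perm = less.prems
  let ?D = "{k\<in>{1..n}. \<sigma> k \<noteq> n + 1 - k}"
  have x01: "\<And>k. k \<in> {1..n} \<Longrightarrow> x k \<in> {0..1}" using sx by (auto simp: sorted_unit_def)
  have y01: "\<And>k. k \<in> {1..n} \<Longrightarrow> y k \<in> {0..1}" using sy by (auto simp: sorted_unit_def)
  have xmono: "\<And>a b. 1 \<le> a \<Longrightarrow> a \<le> b \<Longrightarrow> b \<le> n \<Longrightarrow> x a \<le> x b" using sx by (auto simp: sorted_unit_def)
  have ymono: "\<And>a b. 1 \<le> a \<Longrightarrow> a \<le> b \<Longrightarrow> b \<le> n \<Longrightarrow> y a \<le> y b" using sy by (auto simp: sorted_unit_def)
  have sin: "\<And>k. \<sigma> k \<in> {1..n} \<longleftrightarrow> k \<in> {1..n}" using perm by (rule permutes_in_image)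
  show ?case
  proof (cases "?D = {}")
    case True
    then have "F (\<lambda>k. \<phi> (x (\<sigma> k)) (y k)) n = F (\<lambda>k. \<phi> (x (n + 1 - k)) (y k)) n"
      by (intro F_cong) auto
    then show ?thesis using refl by simp
  next
    case False
    have fD: "finite ?D" by simp
    define j where "j = Max ?D"
    have jD: "j \<in> ?D" using False fD unfolding j_def by (rule Max_in[rotated])
    have jmax: "\<And>k. k \<in> ?D \<Longrightarrow> k \<le> j" using fD unfolding j_def by simp
    have jin: "j \<in> {1..n}" using jD by auto
    define i where "i = inv \<sigma> (n + 1 - j)"
    have si: "\<sigma> i = n + 1 - j" unfolding i_def using perm by (simp add: permutes_inverses)
    have iin: "i \<in> {1..n}" using sin[of i] si jin by auto
    have ij: "i \<noteq> j" using si jD by auto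
    have iD: "i \<in> ?D" using iin si ij jin by auto
    have ilj: "i < j" using jmax[OF iD] ij by simp
    have injs: "inj \<sigma>" using perm by (rule permutes_inj)
    have sjj: "n + 1 - j \<le> \<sigma> j"
    proof (rule ccontr)
      assume a: "\<not> n + 1 - j \<le> \<sigma> j"
      have sjin: "\<sigma> j \<in> {1..n}" using sin jD by auto
      define k where "k = n + 1 - \<sigma> j"
      have kin: "k \<in> {1..n}" using sjin by (auto simp: k_def)
      have kj: "k > j" using a jin sjin by (auto simp: k_def)
      have "\<sigma> k \<noteq> n + 1 - k"
      proof
        assume "\<sigma> k = n + 1 - k"
        then have "\<sigma> k = \<sigma> j" using sjin by (simp add: k_def)
        then show False using injs kj by (auto dest: injD)
      qed
      then have "k \<in> ?D" using kin by auto
      from jmax[OF this] kj show False by simp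
    qed
    define \<sigma>' where "\<sigma>' = \<sigma> \<circ> Transposition.transpose i j"
    have perm': "\<sigma>' permutes {1..n}" unfolding \<sigma>'_def
      using permutes_compose[OF permutes_swap_id[OF iin] perm] jD by auto
    have sub: "{k\<in>{1..n}. \<sigma>' k \<noteq> n + 1 - k} \<subseteq> ?D - {j}"
      using iD si unfolding \<sigma>'_def by (auto simp: Transposition.transpose_def split: if_splits)
    have lt: "card {k\<in>{1..n}. \<sigma>' k \<noteq> n + 1 - k} < card ?D"
      by (rule psubset_card_mono[OF fD]) (use sub jD in blast)
    have IH: "le (F (\<lambda>k. \<phi> (x (n + 1 - k)) (y k)) n) (F (\<lambda>k. \<phi> (x (\<sigma>' k)) (y k)) n)"
      by (rule less.hyps[OF lt perm'])
    have s'i: "\<sigma>' i = \<sigma> j" "\<sigma>' j = n + 1 - j" using si by (auto simp: \<sigma>'_def)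
    have sjin: "\<sigma> j \<in> {1..n}" using sin jD by auto
    have rjin: "n + 1 - j \<in> {1..n}" using jin by auto
    have sw: "le (F (\<lambda>k. \<phi> (x (\<sigma>' k)) (y k)) n) (F (\<lambda>k. \<phi> (x (\<sigma> k)) (y k)) n)"
    proof (rule F_swap[where le=le and h="\<lambda>k. \<phi> (x (\<sigma>' k)) (y k)" and h'="\<lambda>k. \<phi> (x (\<sigma> k)) (y k)", OF iin jin ij])
      show "\<And>a b r. a \<in> {0..1} \<Longrightarrow> b \<in> {0..1} \<Longrightarrow> r \<in> {0..1} \<Longrightarrow> le a b \<Longrightarrow> le (U a r) (U b r)"
        by (rule lemono)
      show "\<And>k. k \<in> {1..n} \<Longrightarrow> k \<noteq> i \<Longrightarrow> k \<noteq> j \<Longrightarrow> \<phi> (x (\<sigma> k)) (y k) = \<phi> (x (\<sigma>' k)) (y k)"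
        by (simp add: \<sigma>'_def)
      show "le (U (\<phi> (x (\<sigma>' i)) (y i)) (\<phi> (x (\<sigma>' j)) (y j))) (U (\<phi> (x (\<sigma> i)) (y i)) (\<phi> (x (\<sigma> j)) (y j)))"
        unfolding s'i si
        by (rule H) (use x01 y01 iin jin sjin rjin sjj ilj xmono ymono in auto)
    qed (use phi x01 y01 iin jin sjin rjin s'i si in auto)
    show ?thesis by (rule trans[OF IH sw])
  qed
qed

end

lemma uninorm_unin: assumes "uninorm U" shows "\<exists>e. unin U e"
proof -
  from assms obtain e where e: "e \<in> {0..1}" "\<forall>x\<in>{0..1}. U e x = x \<and> U x e = x"
    unfolding uninorm_def by blast
  show ?thesis unfolding unin_def
    apply (rule exI[of _ e])
    using assms e unfolding uninorm_def by blast
qed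

lemma uninorm_mono: "uninorm U \<Longrightarrow> a \<in> {0..1} \<Longrightarrow> b \<in> {0..1} \<Longrightarrow> r \<in> {0..1} \<Longrightarrow> a \<le> b \<Longrightarrow> U a r \<le> U b r"
  unfolding uninorm_def by blast

lemma uninorm_mono2: "uninorm U \<Longrightarrow> a \<in> {0..1} \<Longrightarrow> b \<in> {0..1} \<Longrightarrow> r \<in> {0..1} \<Longrightarrow> a \<le> b \<Longrightarrow> U r a \<le> U r b"
  unfolding uninorm_def by metis

lemma uninorm_closed: "uninorm U \<Longrightarrow> a \<in> {0..1} \<Longrightarrow> b \<in> {0..1} \<Longrightarrow> U a b \<in> {0..1}"
  unfolding uninorm_def by blast

lemma uninorm_comm: "uninorm U \<Longrightarrow> a \<in> {0..1} \<Longrightarrow> b \<in> {0..1} \<Longrightarrow> U a b = U b a"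
  unfolding uninorm_def by blast

lemma generic:
  assumes "unin U e"
    and lrefl: "\<And>a. le a a" and ltrans: "\<And>a b c. le a b \<Longrightarrow> le b c \<Longrightarrow> le a c"
    and lemono: "\<And>a b r. a \<in> {0..1} \<Longrightarrow> b \<in> {0..1} \<Longrightarrow> r \<in> {0..1} \<Longrightarrow> le a b \<Longrightarrow> le (U a r) (U b r)"
    and phi: "\<And>a b. a \<in> {0..1} \<Longrightarrow> b \<in> {0..1} \<Longrightarrow> \<phi> a b \<in> {0..1}"
    and H: "\<And>p q y1 y2. p \<in> {0..1} \<Longrightarrow> q \<in> {0..1} \<Longrightarrow> y1 \<in> {0..1} \<Longrightarrow> y2 \<in> {0..1} \<Longrightarrow>
              p \<le> q \<Longrightarrow> y1 \<le> y2 \<Longrightarrow> le (U (\<phi> q y1) (\<phi> p y2)) (U (\<phi> p y1) (\<phi> q y2))"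
    and n: "n \<ge> 1" and sx: "sorted_unit x n" and sy: "sorted_unit y n" and perm: "\<sigma> permutes {1..n}"
  shows "le (iter_op U (\<lambda>i. \<phi> (x (n + 1 - i)) (y i)) n) (iter_op U (\<lambda>i. \<phi> (x (\<sigma> i)) (y i)) n) \<and>
         le (iter_op U (\<lambda>i. \<phi> (x (\<sigma> i)) (y i)) n) (iter_op U (\<lambda>i. \<phi> (x i) (y i)) n)"
proof -
  interpret unin U e by (rule assms(1))
  have x01: "\<And>k. k \<in> {1..n} \<Longrightarrow> x k \<in> {0..1}" using sx by (auto simp: sorted_unit_def)
  have y01: "\<And>k. k \<in> {1..n} \<Longrightarrow> y k \<in> {0..1}" using sy by (auto simp: sorted_unit_def)
  have sin: "\<And>k. \<sigma> k \<in> {1..n} \<longleftrightarrow> k \<in> {1..n}" using perm by (rule permutes_in_image)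
  have e1: "iter_op U (\<lambda>i. \<phi> (x (n + 1 - i)) (y i)) n = F (\<lambda>i. \<phi> (x (n + 1 - i)) (y i)) n"
    by (rule iter_F[OF n]) (intro ballI phi x01 y01; auto)
  have e2: "iter_op U (\<lambda>i. \<phi> (x (\<sigma> i)) (y i)) n = F (\<lambda>i. \<phi> (x (\<sigma> i)) (y i)) n"
    by (rule iter_F[OF n]) (intro ballI phi x01 y01; use sin in blast)
  have e3: "iter_op U (\<lambda>i. \<phi> (x i) (y i)) n = F (\<lambda>i. \<phi> (x i) (y i)) n"
    by (rule iter_F[OF n]) (intro ballI phi x01 y01; simp)
  have m1: "le (F (\<lambda>i. \<phi> (x (n + 1 - i)) (y i)) n) (F (\<lambda>i. \<phi> (x (\<sigma> i)) (y i)) n)"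
    using lrefl ltrans lemono phi H sx sy perm by (rule F_min)
  have m2: "le (F (\<lambda>i. \<phi> (x (\<sigma> i)) (y i)) n) (F (\<lambda>i. \<phi> (x i) (y i)) n)"
    using lrefl ltrans lemono phi H sx sy perm by (rule F_max)
  show ?thesis unfolding e1 e2 e3 using m1 m2 by blast
qed

lemma H1:
  assumes S: "uninorm S" and c: "copula T" and A': "propA' S"
    and v: "p \<in> {0..1}" "q \<in> {0..1}" "y1 \<in> {0..1}" "y2 \<in> {0..1}" and o: "p \<le> q" "y1 \<le> y2"
  shows "S (T q y1) (T p y2) \<le> S (T p y1) (T q y2)"
proof -
  have cl: "\<And>a b. a \<in> {0..1} \<Longrightarrow> b \<in> {0..1} \<Longrightarrow> T a b \<in> {0..1}" using c unfolding copula_def by blast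
  have m1: "\<And>a b r. a \<in> {0..1} \<Longrightarrow> b \<in> {0..1} \<Longrightarrow> r \<in> {0..1} \<Longrightarrow> a \<le> b \<Longrightarrow> T a r \<le> T b r"
    using c unfolding copula_def by blast
  have m2: "\<And>a b r. a \<in> {0..1} \<Longrightarrow> b \<in> {0..1} \<Longrightarrow> r \<in> {0..1} \<Longrightarrow> a \<le> b \<Longrightarrow> T r a \<le> T r b"
    using c unfolding copula_def by blast
  have B: "T p y2 - T p y1 \<le> T q y2 - T q y1"
    using c v o unfolding copula_def by auto
  have AB: "T p y1 \<le> T q y1" using m1 v o by blast
  have AC: "T p y1 \<le> T p y2" using m2 v o by blast
  have BD: "T q y1 \<le> T q y2" using m2 v o by blast
  have CD: "T p y2 \<le> T q y2" using m1 v o by blast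
  have c4: "T p y1 \<in> {0..1}" "T q y1 \<in> {0..1}" "T p y2 \<in> {0..1}" "T q y2 \<in> {0..1}" using cl v by auto
  have pa: "\<And>a b cc d. 0 \<le> a \<Longrightarrow> a \<le> b \<Longrightarrow> b \<le> cc \<Longrightarrow> cc \<le> d \<Longrightarrow> d \<le> 1 \<Longrightarrow> d + a \<ge> b + cc \<Longrightarrow> S a d \<ge> S b cc"
    using A' unfolding propA'_def by blast
  show ?thesis
  proof (cases "T q y1 \<le> T p y2")
    case True
    then show ?thesis using pa[of "T p y1" "T q y1" "T p y2" "T q y2"] AB CD c4 B by auto
  next
    case False
    then have "S (T p y2) (T q y1) \<le> S (T p y1) (T q y2)"
      using pa[of "T p y1" "T p y2" "T q y1" "T q y2"] AC BD c4 B by auto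
    then show ?thesis using uninorm_comm[OF S c4(2) c4(3)] by simp
  qed
qed

lemma H2:
  assumes T: "uninorm T" and S: "uninorm S" and A: "propA T" and c: "copula c"
    and Sc: "\<forall>x\<in>{0..1}. \<forall>y\<in>{0..1}. S x y = copula_dual c x y"
    and v: "p \<in> {0..1}" "q \<in> {0..1}" "y1 \<in> {0..1}" "y2 \<in> {0..1}" and o: "p \<le> q" "y1 \<le> y2"
  shows "T (S p y1) (S q y2) \<le> T (S q y1) (S p y2)"
proof -
  have B: "c (1 - q) (1 - y1) - c (1 - q) (1 - y2) \<le> c (1 - p) (1 - y1) - c (1 - p) (1 - y2)"
    using c v o unfolding copula_def by auto
  have sum: "S p y1 + S q y2 \<le> S q y1 + S p y2"
    using B Sc v by (simp add: copula_dual_def)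
  have AB: "S p y1 \<le> S q y1" using uninorm_mono[OF S] v o by blast
  have AC: "S p y1 \<le> S p y2" using uninorm_mono2[OF S] v o by blast
  have BD: "S q y1 \<le> S q y2" using uninorm_mono2[OF S] v o by blast
  have CD: "S p y2 \<le> S q y2" using uninorm_mono[OF S] v o by blast
  have c4: "S p y1 \<in> {0..1}" "S q y1 \<in> {0..1}" "S p y2 \<in> {0..1}" "S q y2 \<in> {0..1}"
    using uninorm_closed[OF S] v by auto
  have pa: "\<And>a b cc d. 0 \<le> a \<Longrightarrow> a \<le> b \<Longrightarrow> b \<le> cc \<Longrightarrow> cc \<le> d \<Longrightarrow> d \<le> 1 \<Longrightarrow> d + a \<le> b + cc \<Longrightarrow> T a d \<le> T b cc"
    using A unfolding propA_def by blast
  show ?thesis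
  proof (cases "S q y1 \<le> S p y2")
    case True
    then show ?thesis using pa[of "S p y1" "S q y1" "S p y2" "S q y2"] AB CD c4 sum by auto
  next
    case False
    then have "T (S p y1) (S q y2) \<le> T (S p y2) (S q y1)"
      using pa[of "S p y1" "S p y2" "S q y1" "S q y2"] AC BD c4 sum by auto
    then show ?thesis using uninorm_comm[OF T c4(2) c4(3)] by simp
  qed
qed

theorem theorem8:
  fixes T S :: "real \<Rightarrow> real \<Rightarrow> real"
  assumes "uninorm T" and "uninorm S"
  shows "(tnorm T \<and> copula T \<and> propA' S \<longrightarrow> rearrangement T S) \<and>
         (propA T \<and> tconorm S \<and> (\<exists>c. copula c \<and> (\<forall>x\<in>{0..1}. \<forall>y\<in>{0..1}. S x y = copula_dual c x y))
            \<longrightarrow> dual_rearrangement T S)"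
proof (intro conjI impI)
  assume h: "tnorm T \<and> copula T \<and> propA' S"
  obtain e where ue: "unin S e" using uninorm_unin[OF assms(2)] by blast
  have cl: "\<And>a b. a \<in> {0..1} \<Longrightarrow> b \<in> {0..1} \<Longrightarrow> T a b \<in> {0..1}" using uninorm_closed[OF assms(1)] by blast
  show "rearrangement T S"
    unfolding rearrangement_def
  proof (intro allI impI)
    fix n x y \<sigma> assume n: "n \<ge> (1::nat)" and hh: "sorted_unit x n \<and> sorted_unit y n \<and> \<sigma> permutes {1..n}"
    show "iter_op S (\<lambda>i. T (x (n + 1 - i)) (y i)) n \<le> iter_op S (\<lambda>i. T (x (\<sigma> i)) (y i)) n \<and>
      iter_op S (\<lambda>i. T (x (\<sigma> i)) (y i)) n \<le> iter_op S (\<lambda>i. T (x i) (y i)) n"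
      by (rule generic[OF ue, where le="(\<le>)"])
        (use n hh h cl uninorm_mono[OF assms(2)] H1[OF assms(2)] in auto)
  qed
next
  assume h: "propA T \<and> tconorm S \<and> (\<exists>c. copula c \<and> (\<forall>x\<in>{0..1}. \<forall>y\<in>{0..1}. S x y = copula_dual c x y))"
  then obtain c where c: "copula c" and Sc: "\<forall>x\<in>{0..1}. \<forall>y\<in>{0..1}. S x y = copula_dual c x y" by blast
  obtain e where ue: "unin T e" using uninorm_unin[OF assms(1)] by blast
  have cl: "\<And>a b. a \<in> {0..1} \<Longrightarrow> b \<in> {0..1} \<Longrightarrow> S a b \<in> {0..1}" using uninorm_closed[OF assms(2)] by blast
  show "dual_rearrangement T S"
    unfolding dual_rearrangement_def
  proof (intro allI impI)
    fix n x y \<sigma> assume n: "n \<ge> (1::nat)" and hh: "sorted_unit x n \<and> sorted_unit y n \<and> \<sigma> permutes {1..n}"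
    have "(\<lambda>a b. b \<le> a) (iter_op T (\<lambda>i. S (x (n + 1 - i)) (y i)) n) (iter_op T (\<lambda>i. S (x (\<sigma> i)) (y i)) n) \<and>
      (\<lambda>a b. b \<le> a) (iter_op T (\<lambda>i. S (x (\<sigma> i)) (y i)) n) (iter_op T (\<lambda>i. S (x i) (y i)) n)"
      by (rule generic[OF ue, where le="\<lambda>a b. b \<le> a"])
        (use n hh h cl uninorm_mono[OF assms(1)] H2[OF assms(1) assms(2) _ c Sc] in auto)
    then show "iter_op T (\<lambda>i. S (x (n + 1 - i)) (y i)) n \<ge> iter_op T (\<lambda>i. S (x (\<sigma> i)) (y i)) n \<and>
      iter_op T (\<lambda>i. S (x (\<sigma> i)) (y i)) n \<ge> iter_op T (\<lambda>i. S (x i) (y i)) n" by simp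
  qed
qed

end
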